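(* For every $J\subseteq[n]$, the arrangement $\widetilde{\mathcal B_J}$ is free with exponents $(b_{J,1},\dots,b_{J,n})$, where $b_{J,i}=2\,|\{1,\dots,i-1\}\setminus J|+1$.
   Context: $H_\alpha$ is the zero set in $\mathbb C^n$ of a nonzero linear form $\alpha$. $\operatorname{Der}(\mathbb C[\mathbf x_n])=\bigoplus_i\mathbb C[\mathbf x_n]\partial_i$; a derivation $\sum_if_i\partial_i$ is homogeneous of degree $d$ if all $f_i$ are homogeneous of degree $d$. For an arrangement $\mathcal A$, $\operatorname{Der}(\mathcal A)=\{\delta:\alpha\mid\delta(\alpha)\ \forall H_\alpha\in\mathcal A\}$; $\mathcal A$ is free with exponents $(e_1,\dots,e_n)$ if $\operatorname{Der}(\mathcal A)$ has a $\mathbb C[\mathbf x_n]$-basis of homogeneous derivations of degrees $e_1,\dots,e_n$. For $J\subseteq[n]$, $\widetilde{\mathcal B_J}$ is the arrangement consisting of $H_{x_j}$ for all $1\le j\le n$ together with $H_{x_j-x_i}$ and $H_{x_j+x_i}$ for all $j\in[n]\setminus J$ and $j<i\le n$. *)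

theory Defs
  imports Complex_Main "HOL-Library.Poly_Mapping"
begin

text \<open>Polynomials in finitely many commuting variables x_1, x_2, ... over the complex
numbers: finitely supported maps from monomials (exponent vectors, nat =>0 nat)
to coefficients.\<close>
type_synonym mpoly = "(nat \<Rightarrow>\<^sub>0 nat) \<Rightarrow>\<^sub>0 complex"

definition polyring :: "nat \<Rightarrow> mpoly set" where
  "polyring n = {p::mpoly. \<forall>m::nat\<Rightarrow>\<^sub>0 nat \<in> Poly_Mapping.keys p. Poly_Mapping.keys m \<subseteq> {1..n}}"

definition Var :: "nat \<Rightarrow> mpoly" where
  "Var i = Poly_Mapping.single (Poly_Mapping.single i 1) 1"

definition mon_degree :: "(nat \<Rightarrow>\<^sub>0 nat) \<Rightarrow> nat" where
  "mon_degree m = (\<Sum>i\<in>Poly_Mapping.keys m. Poly_Mapping.lookup m i)"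

definition homogeneous :: "nat \<Rightarrow> mpoly \<Rightarrow> bool" where
  "homogeneous d p \<longleftrightarrow> (\<forall>m \<in> Poly_Mapping.keys p. mon_degree m = d)"

definition pdiff :: "nat \<Rightarrow> mpoly \<Rightarrow> mpoly" where
  "pdiff i p = (\<Sum>m\<in>Poly_Mapping.keys p. Poly_Mapping.single (m - Poly_Mapping.single i 1)
                                   (of_nat (Poly_Mapping.lookup m i) * Poly_Mapping.lookup p m))"

text \<open>A derivation of C[x_1,...,x_n] is given by its coefficients f_1,...,f_n
  (the derivation is sum f_i d_i); we represent it as a function
  nat => mpoly, of which only the values at 1..n matter.\<close>
definition is_der :: "nat \<Rightarrow> (nat \<Rightarrow> mpoly) \<Rightarrow> bool" where
  "is_der n \<delta> \<longleftrightarrow> (\<forall>i\<in>{1..n}. \<delta> i \<in> polyring n) \<and> (\<forall>i. i \<notin> {1..n} \<longrightarrow> \<delta> i = 0)"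

definition apply_der :: "nat \<Rightarrow> (nat \<Rightarrow> mpoly) \<Rightarrow> mpoly \<Rightarrow> mpoly" where
  "apply_der n \<delta> p = (\<Sum>i=1..n. \<delta> i * pdiff i p)"

definition homogeneous_der :: "nat \<Rightarrow> nat \<Rightarrow> (nat \<Rightarrow> mpoly) \<Rightarrow> bool" where
  "homogeneous_der n d \<delta> \<longleftrightarrow> (\<forall>i\<in>{1..n}. homogeneous d (\<delta> i))"

text \<open>An arrangement is given by a set of (nonzero) linear forms alpha, one defining
  form for each hyperplane H_alpha.  Der(A) = {delta. alpha divides delta(alpha)
  in C[x_1..x_n] for all alpha}.\<close>
definition Der_arr :: "nat \<Rightarrow> mpoly set \<Rightarrow> (nat \<Rightarrow> mpoly) set" where
  "Der_arr n A = {\<delta>. is_der n \<delta> \<and>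
      (\<forall>\<alpha>\<in>A. \<exists>q\<in>polyring n. apply_der n \<delta> \<alpha> = \<alpha> * q)}"

definition free_with_exponents :: "nat \<Rightarrow> mpoly set \<Rightarrow> (nat \<Rightarrow> nat) \<Rightarrow> bool" where
  "free_with_exponents n A e \<longleftrightarrow>
     (\<exists>\<theta> :: nat \<Rightarrow> nat \<Rightarrow> mpoly.
        (\<forall>j\<in>{1..n}. \<theta> j \<in> Der_arr n A \<and> homogeneous_der n (e j) (\<theta> j)) \<and>
        (\<forall>\<delta>\<in>Der_arr n A. \<exists>g. (\<forall>j\<in>{1..n}. g j \<in> polyring n) \<and>
              (\<forall>i. \<delta> i = (\<Sum>j=1..n. g j * \<theta> j i))) \<and>
        (\<forall>g. (\<forall>j\<in>{1..n}. g j \<in> polyring n) \<and> (\<forall>i. (\<Sum>j=1..n. g j * \<theta> j i) = 0)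
              \<longrightarrow> (\<forall>j\<in>{1..n}. g j = 0)))"

definition B_tilde :: "nat \<Rightarrow> nat set \<Rightarrow> mpoly set" where
  "B_tilde n J = {Var j | j. j \<in> {1..n}}
     \<union> {Var j - Var i | i j. j \<in> {1..n} - J \<and> j < i \<and> i \<le> n}
     \<union> {Var j + Var i | i j. j \<in> {1..n} - J \<and> j < i \<and> i \<le> n}"

end

theory Submission
  imports Defs
begin

abbreviation cst :: "complex \<Rightarrow> mpoly" where "cst c \<equiv> Poly_Mapping.single 0 c"

lemma lookup_minus_nat: "Poly_Mapping.lookup (m - m') k = Poly_Mapping.lookup m k - Poly_Mapping.lookup (m'::nat\<Rightarrow>\<^sub>0nat) k"
  by (rule lookup_minus)

lemma poly_expand: "(p::mpoly) = (\<Sum>m\<in>Poly_Mapping.keys p. Poly_Mapping.single m (Poly_Mapping.lookup p m))"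
proof (rule poly_mapping_eqI)
  fix k
  show "Poly_Mapping.lookup p k = Poly_Mapping.lookup (\<Sum>m\<in>Poly_Mapping.keys p. Poly_Mapping.single m (Poly_Mapping.lookup p m)) k"
  proof (cases "k \<in> Poly_Mapping.keys p")
    case True
    have "(\<Sum>m\<in>Poly_Mapping.keys p. Poly_Mapping.lookup (Poly_Mapping.single m (Poly_Mapping.lookup p m)) k)
       = (\<Sum>m\<in>{k}. Poly_Mapping.lookup (Poly_Mapping.single m (Poly_Mapping.lookup p m)) k)"
      by (rule sum.mono_neutral_right) (auto simp: True lookup_single)
    then show ?thesis by (simp add: lookup_sum)
  next
    case False
    then show ?thesis by (auto simp: lookup_sum lookup_single in_keys_iff when_def intro!: sum.neutral)
  qed
qed

definition ext :: "((nat \<Rightarrow>\<^sub>0 nat) \<Rightarrow> mpoly) \<Rightarrow> mpoly \<Rightarrow> mpoly" where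
  "ext f p = (\<Sum>m\<in>Poly_Mapping.keys p. cst (Poly_Mapping.lookup p m) * f m)"

lemma ext_superset:
  assumes "finite S" "Poly_Mapping.keys p \<subseteq> S"
  shows "ext f p = (\<Sum>m\<in>S. cst (Poly_Mapping.lookup p m) * f m)"
  unfolding ext_def
  by (rule sum.mono_neutral_left) (use assms in \<open>auto simp: in_keys_iff\<close>)

lemma ext_add: "ext f (p + q) = ext f p + ext f q"
proof -
  let ?S = "Poly_Mapping.keys p \<union> Poly_Mapping.keys q"
  have "ext f (p + q) = (\<Sum>m\<in>?S. cst (Poly_Mapping.lookup (p+q) m) * f m)"
    using keys_add[of p q] by (intro ext_superset) auto
  also have "\<dots> = (\<Sum>m\<in>?S. cst (Poly_Mapping.lookup p m) * f m) + (\<Sum>m\<in>?S. cst (Poly_Mapping.lookup q m) * f m)"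
    by (simp add: lookup_add single_add distrib_right sum.distrib)
  also have "\<dots> = ext f p + ext f q"
    by (simp add: ext_superset[of ?S p] ext_superset[of ?S q])
  finally show ?thesis .
qed

lemma ext_zero[simp]: "ext f 0 = 0" by (simp add: ext_def)

lemma ext_uminus: "ext f (- p) = - ext f p"
  by (simp add: ext_def single_uminus sum_negf)

lemma ext_diff: "ext f (p - q) = ext f p - ext f q"
  using ext_add[of f p "-q"] by (simp add: ext_uminus)

lemma ext_sum: "ext f (sum g A) = (\<Sum>a\<in>A. ext f (g a))"
  by (induction A rule: infinite_finite_induct) (auto simp: ext_add)

lemma ext_single: "ext f (Poly_Mapping.single m c) = cst c * f m"
  by (cases "c = 0") (auto simp: ext_def)

lemma ext_mult:
  assumes "\<And>m m'. f (m + m') = f m * f m'"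
  shows "ext f (p * q) = ext f p * ext f q"
proof -
  let ?P = "Poly_Mapping.keys p" and ?Q = "Poly_Mapping.keys q"
  have "p * q = (\<Sum>m\<in>?P. Poly_Mapping.single m (Poly_Mapping.lookup p m)) * (\<Sum>m\<in>?Q. Poly_Mapping.single m (Poly_Mapping.lookup q m))"
    using poly_expand[of p] poly_expand[of q] by simp
  also have "\<dots> = (\<Sum>m\<in>?P. \<Sum>m'\<in>?Q. Poly_Mapping.single (m+m') (Poly_Mapping.lookup p m * Poly_Mapping.lookup q m'))"
    by (simp add: sum_product mult_single)
  finally have "ext f (p*q) = (\<Sum>m\<in>?P. \<Sum>m'\<in>?Q. cst (Poly_Mapping.lookup p m * Poly_Mapping.lookup q m') * f (m+m'))"
    by (simp add: ext_sum ext_single)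
  also have "\<dots> = (\<Sum>m\<in>?P. \<Sum>m'\<in>?Q. (cst (Poly_Mapping.lookup p m) * f m) * (cst (Poly_Mapping.lookup q m') * f m'))"
    by (simp add: assms mult_single mult_ac)
  also have "\<dots> = ext f p * ext f q"
    by (simp add: ext_def sum_product)
  finally show ?thesis .
qed

lemma ext_one: "ext f 1 = f 0"
  using ext_single[of f 0 1] by (simp del: single_one add: single_one[symmetric])

lemma ext_prod:
  assumes "\<And>m m'. f (m + m') = f m * f m'" "f 0 = 1"
  shows "ext f (prod g A) = (\<Prod>a\<in>A. ext f (g a))"
  by (induction A rule: infinite_finite_induct) (auto simp: ext_mult[OF assms(1)] ext_one assms(2))

lemma ext_power:
  assumes "\<And>m m'. f (m + m') = f m * f m'" "f 0 = 1"
  shows "ext f (p ^ k) = ext f p ^ k"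
  by (induction k) (auto simp: ext_mult[OF assms(1)] ext_one assms(2))

lemma ext_id:
  assumes "\<And>m. m \<in> Poly_Mapping.keys p \<Longrightarrow> f m = Poly_Mapping.single m 1"
  shows "ext f p = p"
proof -
  have "ext f p = (\<Sum>m\<in>Poly_Mapping.keys p. Poly_Mapping.single m (Poly_Mapping.lookup p m))"
    unfolding ext_def by (rule sum.cong) (auto simp: assms mult_single)
  then show ?thesis using poly_expand[of p] by simp
qed


abbreviation e1 :: "nat \<Rightarrow> (nat \<Rightarrow>\<^sub>0 nat)" where "e1 i \<equiv> Poly_Mapping.single i 1"

definition subst :: "nat \<Rightarrow> mpoly \<Rightarrow> mpoly \<Rightarrow> mpoly" where
  "subst i b = ext (\<lambda>m. Poly_Mapping.single (m - Poly_Mapping.single i (Poly_Mapping.lookup m i)) 1 * b ^ Poly_Mapping.lookup m i)"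

lemma subst_mult_aux:
  "(m + m') - Poly_Mapping.single i (Poly_Mapping.lookup (m + m') i)
   = (m - Poly_Mapping.single i (Poly_Mapping.lookup m i)) + (m' - Poly_Mapping.single i (Poly_Mapping.lookup m' i))"
  by (rule poly_mapping_eqI) (auto simp: lookup_minus lookup_add lookup_single when_def)

lemma subst_f_mult:
  fixes b :: mpoly
  shows "Poly_Mapping.single ((m + m') - Poly_Mapping.single i (Poly_Mapping.lookup (m + m') i)) 1 * b ^ Poly_Mapping.lookup (m + m') i
   = (Poly_Mapping.single (m - Poly_Mapping.single i (Poly_Mapping.lookup m i)) 1 * b ^ Poly_Mapping.lookup m i) *
     (Poly_Mapping.single (m' - Poly_Mapping.single i (Poly_Mapping.lookup m' i)) 1 * b ^ Poly_Mapping.lookup m' i)"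
    (is "?L = (Poly_Mapping.single ?A 1 * b ^ ?x) * (Poly_Mapping.single ?B 1 * b ^ ?y)")
proof -
  have "?L = Poly_Mapping.single (?A + ?B) 1 * (b ^ ?x * b ^ ?y)"
    by (subst subst_mult_aux) (simp only: lookup_add power_add)
  also have "\<dots> = Poly_Mapping.single ?A 1 * Poly_Mapping.single ?B 1 * (b ^ ?x * b ^ ?y)"
    by (simp add: mult_single)
  finally show ?thesis by (simp add: mult_ac)
qed

lemma subst_mult: "subst i b (p * q) = subst i b p * subst i b q"
  unfolding subst_def by (rule ext_mult) (rule subst_f_mult)

lemma subst_f_zero: "Poly_Mapping.single (0 - Poly_Mapping.single i (Poly_Mapping.lookup 0 i)) 1 * (b::mpoly) ^ Poly_Mapping.lookup 0 i = 1"
  by simp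

lemma subst_prod: "subst i b (prod g A) = (\<Prod>a\<in>A. subst i b (g a))"
  unfolding subst_def by (rule ext_prod) (rule subst_f_mult, rule subst_f_zero)

lemma subst_add: "subst i b (p + q) = subst i b p + subst i b q"
  by (simp add: subst_def ext_add)
lemma subst_diff: "subst i b (p - q) = subst i b p - subst i b q"
  by (simp add: subst_def ext_diff)
lemma subst_uminus: "subst i b (- p) = - subst i b p"
  by (simp add: subst_def ext_uminus)
lemma subst_zero[simp]: "subst i b 0 = 0"
  by (simp add: subst_def)

definition free :: "nat \<Rightarrow> mpoly \<Rightarrow> bool" where
  "free i p \<longleftrightarrow> (\<forall>m\<in>Poly_Mapping.keys p. Poly_Mapping.lookup m i = 0)"

lemma subst_free: "free i p \<Longrightarrow> subst i b p = p"
  unfolding subst_def free_def by (rule ext_id) simp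

lemma subst_Var_same: "subst i b (Var i) = b"
  by (simp add: subst_def Var_def ext_single)

lemma subst_Var_other: "k \<noteq> i \<Longrightarrow> subst i b (Var k) = Var k"
  by (simp add: subst_def Var_def ext_single lookup_single)

lemma free_Var: "k \<noteq> i \<Longrightarrow> free i (Var k)"
  by (simp add: free_def Var_def lookup_single)
lemma free_uminus: "free i p \<Longrightarrow> free i (- p)"
  by (simp add: free_def)
lemma free_zero: "free i 0"
  by (simp add: free_def)

lemma Var_power: "Var i ^ k = Poly_Mapping.single (Poly_Mapping.single i k) 1"
proof (induction k)
  case 0 then show ?case by simp
next
  case (Suc k)
  then show ?case by (simp add: Var_def mult_single single_add[symmetric])
qed

lemma dvd_power_diff_gen: "(x - y) dvd (x ^ k - (y::'a::comm_ring_1) ^ k)"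
proof (induction k)
  case 0 then show ?case by simp
next
  case (Suc k)
  have "x ^ Suc k - y ^ Suc k = x * (x ^ k - y ^ k) + (x - y) * y ^ k"
    by (simp add: algebra_simps)
  then show ?case using Suc by (simp add: dvd_add)
qed

lemma factor_theorem:
  assumes "subst i b p = 0"
  shows "(Var i - b) dvd p"
proof -
  let ?f = "\<lambda>m. Poly_Mapping.single (m - Poly_Mapping.single i (Poly_Mapping.lookup m i)) 1 * b ^ Poly_Mapping.lookup m i"
  have idp: "ext (\<lambda>m. Poly_Mapping.single m 1) p = p" by (rule ext_id) simp
  have "p - subst i b p = (\<Sum>m\<in>Poly_Mapping.keys p. cst (Poly_Mapping.lookup p m) * (Poly_Mapping.single m 1 - ?f m))"
    unfolding subst_def using idp[unfolded ext_def]
    by (simp add: ext_def right_diff_distrib sum_subtractf)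
  also have "(Var i - b) dvd \<dots>"
  proof (rule dvd_sum)
    fix m :: "nat \<Rightarrow>\<^sub>0 nat"
    let ?k = "Poly_Mapping.lookup m i"
    have meq: "m = (m - Poly_Mapping.single i ?k) + Poly_Mapping.single i ?k"
      by (rule poly_mapping_eqI) (auto simp: lookup_minus_nat lookup_add lookup_single when_def)
    have "Poly_Mapping.single m 1 = Poly_Mapping.single (m - Poly_Mapping.single i ?k) (1::complex) * Var i ^ ?k"
      by (subst meq) (simp add: Var_power mult_single)
    then have "Poly_Mapping.single m 1 - ?f m = Poly_Mapping.single (m - Poly_Mapping.single i ?k) 1 * (Var i ^ ?k - b ^ ?k)"
      by (simp add: right_diff_distrib)
    then show "(Var i - b) dvd cst (Poly_Mapping.lookup p m) * (Poly_Mapping.single m 1 - ?f m)"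
      by (simp add: dvd_power_diff_gen dvd_mult)
  qed
  finally show ?thesis using assms by simp
qed

lemma dvd_subst_zero:
  assumes "(Var i - b) dvd p" "free i b"
  shows "subst i b p = 0"
proof -
  obtain q where "p = (Var i - b) * q" using assms by blast
  then show ?thesis by (simp add: subst_mult subst_diff subst_Var_same subst_free assms(2))
qed


definition restr :: "nat \<Rightarrow> mpoly \<Rightarrow> mpoly" where
  "restr n = ext (\<lambda>m. if Poly_Mapping.keys m \<subseteq> {1..n} then Poly_Mapping.single m 1 else 0)"

lemma keys_add_nat: "Poly_Mapping.keys ((m::nat\<Rightarrow>\<^sub>0nat) + m') = Poly_Mapping.keys m \<union> Poly_Mapping.keys m'"
  by (auto simp: in_keys_iff lookup_add)

lemma restr_f_mult:
  fixes m m' :: "nat \<Rightarrow>\<^sub>0 nat"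
  shows "(if Poly_Mapping.keys (m + m') \<subseteq> {1..n} then Poly_Mapping.single (m + m') (1::complex) else 0)
   = (if Poly_Mapping.keys m \<subseteq> {1..n} then Poly_Mapping.single m 1 else 0) *
     (if Poly_Mapping.keys m' \<subseteq> {1..n} then Poly_Mapping.single m' 1 else 0)"
  by (auto simp: keys_add_nat mult_single)

lemma restr_mult: "restr n (p * q) = restr n p * restr n q"
  unfolding restr_def by (rule ext_mult) (rule restr_f_mult)
lemma restr_add: "restr n (p + q) = restr n p + restr n q"
  by (simp add: restr_def ext_add)
lemma restr_diff: "restr n (p - q) = restr n p - restr n q"
  by (simp add: restr_def ext_diff)

lemma restr_id: "p \<in> polyring n \<Longrightarrow> restr n p = p"
  unfolding restr_def polyring_def by (rule ext_id) auto

lemma restr_in: "restr n p \<in> polyring n"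
proof -
  have "restr n p = (\<Sum>m\<in>Poly_Mapping.keys p. (if Poly_Mapping.keys m \<subseteq> {1..n} then Poly_Mapping.single m (Poly_Mapping.lookup p m) else 0))"
    unfolding restr_def ext_def by (rule sum.cong) (auto simp: mult_single)
  moreover have "Poly_Mapping.keys m \<subseteq> {1..n}" if "m \<in> Poly_Mapping.keys (\<Sum>m\<in>Poly_Mapping.keys p. (if Poly_Mapping.keys m \<subseteq> {1..n} then Poly_Mapping.single m (Poly_Mapping.lookup p m) else 0))" for m
  proof -
    from that keys_sum[of "\<lambda>m. (if Poly_Mapping.keys m \<subseteq> {1..n} then Poly_Mapping.single m (Poly_Mapping.lookup p m) else 0)" "Poly_Mapping.keys p"]
    obtain m' where "m \<in> Poly_Mapping.keys (if Poly_Mapping.keys m' \<subseteq> {1..n} then Poly_Mapping.single m' (Poly_Mapping.lookup p m') else 0)"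
      by blast
    then show ?thesis by (auto split: if_splits)
  qed
  ultimately show ?thesis unfolding polyring_def mem_Collect_eq by (simp only:) blast
qed

lemma polyring_iff: "p \<in> polyring n \<longleftrightarrow> restr n p = p"
  using restr_id restr_in by metis

lemma polyring_mult: "p \<in> polyring n \<Longrightarrow> q \<in> polyring n \<Longrightarrow> p * q \<in> polyring n"
  by (simp add: polyring_iff restr_mult)
lemma polyring_add: "p \<in> polyring n \<Longrightarrow> q \<in> polyring n \<Longrightarrow> p + q \<in> polyring n"
  by (simp add: polyring_iff restr_add)
lemma polyring_diff: "p \<in> polyring n \<Longrightarrow> q \<in> polyring n \<Longrightarrow> p - q \<in> polyring n"
  by (simp add: polyring_iff restr_diff)
lemma polyring_zero: "0 \<in> polyring n"
  by (simp add: polyring_def)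
lemma polyring_one: "1 \<in> polyring n"
  by (simp add: polyring_def)
lemma polyring_uminus: "p \<in> polyring n \<Longrightarrow> - p \<in> polyring n"
  using polyring_diff[OF polyring_zero, of p] by simp
lemma polyring_prod: "(\<And>a. a \<in> A \<Longrightarrow> g a \<in> polyring n) \<Longrightarrow> prod g A \<in> polyring n"
  by (induction A rule: infinite_finite_induct) (auto intro: polyring_one polyring_mult)
lemma polyring_sum: "(\<And>a. a \<in> A \<Longrightarrow> g a \<in> polyring n) \<Longrightarrow> sum g A \<in> polyring n"
  by (induction A rule: infinite_finite_induct) (auto intro: polyring_zero polyring_add)
lemma polyring_Var: "k \<in> {1..n} \<Longrightarrow> Var k \<in> polyring n"
  by (simp add: polyring_def Var_def)

lemma polyring_quot:
  assumes "p \<in> polyring n" "a \<in> polyring n" "a \<noteq> 0" "p = a * q"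
  shows "q \<in> polyring n"
proof -
  have "a * q = a * restr n q"
    using assms restr_mult[of n a q] by (simp add: restr_id)
  then have "q = restr n q" using assms(3) by simp
  then show ?thesis using restr_in[of n q] by (simp only: eq_commute[of q])
qed

lemma polyring_dvd:
  assumes "p \<in> polyring n" "a \<in> polyring n" "a \<noteq> 0" "a dvd p"
  shows "\<exists>q\<in>polyring n. p = a * q"
proof -
  from assms(4) obtain q where "p = a * q" by (rule dvdE)
  with assms(1-3) polyring_quot[of p n a q] show ?thesis by blast
qed

lemma lookup_Var: "Poly_Mapping.lookup (Var k) m = (if m = e1 k then 1 else 0)"
  by (simp add: Var_def lookup_single when_def)

lemma Var_nonzero: "Var k \<noteq> 0"
  using lookup_Var[of k "e1 k"] by auto

lemma Var_inj: "Var k = Var l \<Longrightarrow> k = l"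
proof -
  assume "Var k = Var l"
  then have "Poly_Mapping.lookup (Var l) (e1 k) = 1" using lookup_Var[of k "e1 k"] by simp
  then have "e1 k = e1 l" using lookup_Var[of l "e1 k"] by (simp split: if_splits)
  then have "Poly_Mapping.lookup (e1 k) k = Poly_Mapping.lookup (e1 l) k" by simp
  then show "k = l" by (auto simp: lookup_single when_def split: if_splits)
qed

lemma Var_neq_neg: "Var k \<noteq> - Var l"
proof
  assume "Var k = - Var l"
  then have "Poly_Mapping.lookup (Var k) (e1 k) = - Poly_Mapping.lookup (Var l) (e1 k)" by simp
  moreover have "Poly_Mapping.lookup (Var k) (e1 k) = 1" by (simp add: lookup_Var)
  moreover have "Poly_Mapping.lookup (Var l) (e1 k) \<in> {0,1}" by (simp add: lookup_Var)
  ultimately show False by auto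
qed

lemma Var_minus_free_nonzero:
  assumes "free i a" shows "Var i - a \<noteq> 0"
proof
  assume "Var i - a = 0"
  then have "a = Var i" by simp
  moreover have "e1 i \<in> Poly_Mapping.keys (Var i)" by (simp add: Var_def)
  ultimately have "Poly_Mapping.lookup (e1 i) i = 0" using assms unfolding free_def by blast
  then show False by simp
qed


lemma pdiff_superset:
  assumes "finite S" "Poly_Mapping.keys p \<subseteq> S"
  shows "pdiff i p = (\<Sum>m\<in>S. Poly_Mapping.single (m - e1 i) (of_nat (Poly_Mapping.lookup m i) * Poly_Mapping.lookup p m))"
  unfolding pdiff_def
  by (rule sum.mono_neutral_left) (use assms in \<open>auto simp: in_keys_iff\<close>)

lemma pdiff_add: "pdiff i (p + q) = pdiff i p + pdiff i q"
proof -
  let ?S = "Poly_Mapping.keys p \<union> Poly_Mapping.keys q"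
  have "pdiff i (p + q) = (\<Sum>m\<in>?S. Poly_Mapping.single (m - e1 i) (of_nat (Poly_Mapping.lookup m i) * Poly_Mapping.lookup (p+q) m))"
    using keys_add[of p q] by (intro pdiff_superset) auto
  also have "\<dots> = (\<Sum>m\<in>?S. Poly_Mapping.single (m - e1 i) (of_nat (Poly_Mapping.lookup m i) * Poly_Mapping.lookup p m))
     + (\<Sum>m\<in>?S. Poly_Mapping.single (m - e1 i) (of_nat (Poly_Mapping.lookup m i) * Poly_Mapping.lookup q m))"
    by (simp add: lookup_add single_add distrib_left sum.distrib)
  also have "\<dots> = pdiff i p + pdiff i q"
    by (simp add: pdiff_superset[of ?S p] pdiff_superset[of ?S q])
  finally show ?thesis .
qed

lemma pdiff_uminus: "pdiff i (- p) = - pdiff i p"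
  by (simp add: pdiff_def single_uminus sum_negf)

lemma pdiff_diff: "pdiff i (p - q) = pdiff i p - pdiff i q"
  using pdiff_add[of i p "-q"] by (simp add: pdiff_uminus)

lemma pdiff_Var: "pdiff i (Var k) = (if i = k then 1 else 0)"
  by (simp add: pdiff_def Var_def lookup_single when_def)

lemma apply_der_Var: "k \<in> {1..n} \<Longrightarrow> apply_der n \<delta> (Var k) = \<delta> k"
  by (simp add: apply_der_def pdiff_Var if_distrib cong: if_cong)

lemma apply_der_diff: "apply_der n \<delta> (p - q) = apply_der n \<delta> p - apply_der n \<delta> q"
  by (simp add: apply_der_def pdiff_diff right_diff_distrib sum_subtractf)

lemma apply_der_add: "apply_der n \<delta> (p + q) = apply_der n \<delta> p + apply_der n \<delta> q"
  by (simp add: apply_der_def pdiff_add distrib_left sum.distrib)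

lemma mon_degree_superset:
  assumes "finite S" "Poly_Mapping.keys m \<subseteq> S"
  shows "mon_degree m = (\<Sum>i\<in>S. Poly_Mapping.lookup m i)"
  unfolding mon_degree_def
  by (rule sum.mono_neutral_left) (use assms in \<open>auto simp: in_keys_iff\<close>)

lemma mon_degree_add: "mon_degree (m + m') = mon_degree m + mon_degree m'"
proof -
  let ?S = "Poly_Mapping.keys m \<union> Poly_Mapping.keys m'"
  have "mon_degree (m + m') = (\<Sum>i\<in>?S. Poly_Mapping.lookup (m+m') i)"
    by (rule mon_degree_superset) (auto simp: keys_add_nat)
  also have "\<dots> = (\<Sum>i\<in>?S. Poly_Mapping.lookup m i) + (\<Sum>i\<in>?S. Poly_Mapping.lookup m' i)"
    by (simp add: lookup_add sum.distrib)
  also have "\<dots> = mon_degree m + mon_degree m'"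
    by (simp add: mon_degree_superset[of ?S m] mon_degree_superset[of ?S m'])
  finally show ?thesis .
qed

lemma homogeneous_mult: "homogeneous d p \<Longrightarrow> homogeneous e q \<Longrightarrow> homogeneous (d + e) (p * q)"
  unfolding homogeneous_def using keys_mult[of p q] by (fastforce simp: mon_degree_add)

lemma homogeneous_add: "homogeneous d p \<Longrightarrow> homogeneous d q \<Longrightarrow> homogeneous d (p + q)"
  unfolding homogeneous_def using keys_add[of p q] by blast

lemma homogeneous_uminus: "homogeneous d p \<Longrightarrow> homogeneous d (- p)"
  unfolding homogeneous_def by simp

lemma homogeneous_diff: "homogeneous d p \<Longrightarrow> homogeneous d q \<Longrightarrow> homogeneous d (p - q)"
  using homogeneous_add[of d p "-q"] homogeneous_uminus[of d q] by simp

lemma homogeneous_zero: "homogeneous d 0"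
  unfolding homogeneous_def by simp

lemma homogeneous_one: "homogeneous 0 1"
  unfolding homogeneous_def by (simp add: mon_degree_def)

lemma homogeneous_Var: "homogeneous 1 (Var k)"
  unfolding homogeneous_def by (simp add: Var_def mon_degree_def)

lemma homogeneous_prod:
  "(\<And>a. a \<in> A \<Longrightarrow> homogeneous 1 (g a)) \<Longrightarrow> homogeneous (card A) (prod g A)"
proof (induction A rule: infinite_finite_induct)
  case (infinite A) then show ?case by (simp add: homogeneous_one)
next
  case empty then show ?case by (simp add: homogeneous_one)
next
  case (insert x F)
  then show ?case using homogeneous_mult[of 1 "g x" "card F" "prod g F"] by simp
qed


lemma subst_prod_lin:
  assumes "\<And>a. a \<in> A \<Longrightarrow> free i a"
  shows "subst i b (\<Prod>a\<in>A. Var i - a) = (\<Prod>a\<in>A. b - a)"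
  using assms by (simp add: subst_prod subst_diff subst_Var_same subst_free)

lemma prod_lin_dvd:
  assumes "finite A" "\<And>a. a \<in> A \<Longrightarrow> free i a" "\<And>a. a \<in> A \<Longrightarrow> (Var i - a) dvd p"
  shows "(\<Prod>a\<in>A. Var i - a) dvd p"
  using assms
proof (induction A rule: finite_induct)
  case empty then show ?case by simp
next
  case (insert x F)
  then have "(\<Prod>a\<in>F. Var i - a) dvd p" by auto
  then obtain q where q: "p = (\<Prod>a\<in>F. Var i - a) * q" by (rule dvdE)
  have fx: "free i x" using insert by auto
  have "subst i x p = 0" using insert by (intro dvd_subst_zero) auto
  then have "(\<Prod>a\<in>F. x - a) * subst i x q = 0"
    using q insert by (simp add: subst_mult subst_prod_lin)
  moreover have "(\<Prod>a\<in>F. x - a) \<noteq> 0"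
    using insert by (auto simp: prod_zero_iff)
  ultimately have "subst i x q = 0" by simp
  then have "(Var i - x) dvd q" by (rule factor_theorem)
  then show ?case using q insert by (simp add: mult_dvd_mono)
qed


definition SS :: "nat set \<Rightarrow> nat \<Rightarrow> nat set" where
  "SS J i = {1..<i} - J"

definition AA :: "nat set \<Rightarrow> nat \<Rightarrow> mpoly set" where
  "AA J i = insert 0 (Var ` SS J i \<union> (\<lambda>j. - Var j) ` SS J i)"

definition PP :: "nat set \<Rightarrow> nat \<Rightarrow> mpoly \<Rightarrow> mpoly" where
  "PP J i t = (\<Prod>a\<in>AA J i. t - a)"

definition th :: "nat \<Rightarrow> nat set \<Rightarrow> nat \<Rightarrow> nat \<Rightarrow> mpoly" where
  "th n J i k = (if i \<le> k \<and> k \<le> n \<and> 1 \<le> k then PP J i (Var k) else 0)"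

lemma finite_SS: "finite (SS J i)" by (simp add: SS_def)
lemma finite_AA: "finite (AA J i)" by (simp add: AA_def finite_SS)

lemma card_AA: "card (AA J i) = 2 * card (SS J i) + 1"
proof -
  have inj1: "inj_on Var (SS J i)" using Var_inj by (auto simp: inj_on_def)
  have inj2: "inj_on (\<lambda>j. - Var j) (SS J i)" using Var_inj by (auto simp: inj_on_def)
  have disj: "Var ` SS J i \<inter> (\<lambda>j. - Var j) ` SS J i = {}" using Var_neq_neg by auto
  have n0: "0 \<notin> Var ` SS J i \<union> (\<lambda>j. - Var j) ` SS J i" using Var_nonzero by auto
  have "card (Var ` SS J i \<union> (\<lambda>j. - Var j) ` SS J i) = card (SS J i) + card (SS J i)"
    using card_Un_disjoint[OF finite_imageI[OF finite_SS] finite_imageI[OF finite_SS] disj]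
      card_image[OF inj1] card_image[OF inj2] by simp
  then show ?thesis unfolding AA_def using n0 finite_SS by simp
qed

lemma AA_uminus: "uminus ` AA J i = AA J i"
proof -
  have "uminus ` AA J i \<subseteq> AA J i" for J i by (auto simp: AA_def)
  then have "uminus ` (uminus ` AA J i) \<subseteq> uminus ` AA J i" by blast
  then have "AA J i \<subseteq> uminus ` AA J i" by (simp add: image_image)
  with \<open>uminus ` AA J i \<subseteq> AA J i\<close> show ?thesis by blast
qed

lemma PP_odd: "PP J i (- t) = - PP J i t"
proof -
  have "PP J i (- t) = (\<Prod>a\<in>AA J i. - (t - (- a)))" unfolding PP_def by (intro prod.cong refl) (simp add: algebra_simps)
  also have "\<dots> = (- 1) ^ card (AA J i) * (\<Prod>a\<in>AA J i. t - (- a))" by (rule prod_uminus)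
  also have "(\<Prod>a\<in>AA J i. t - (- a)) = (\<Prod>a\<in>uminus ` AA J i. t - a)"
    by (subst prod.reindex) (auto simp: inj_on_def)
  also have "\<dots> = PP J i t" by (simp add: AA_uminus PP_def)
  finally show ?thesis by (simp add: card_AA)
qed

lemma AA_free: "a \<in> AA J i \<Longrightarrow> i \<le> k \<Longrightarrow> free k a"
  by (auto simp: AA_def SS_def free_zero intro!: free_uminus free_Var)

lemma AA_polyring: "a \<in> AA J i \<Longrightarrow> i \<le> Suc n \<Longrightarrow> a \<in> polyring n"
  by (auto simp: AA_def SS_def polyring_zero intro!: polyring_uminus polyring_Var)

lemma subst_PP: "i \<le> k \<Longrightarrow> subst k b (PP J i (Var k)) = PP J i b"
  unfolding PP_def by (rule subst_prod_lin) (auto intro: AA_free)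

lemma subst_PP_other: "i \<le> k \<Longrightarrow> l \<noteq> k \<Longrightarrow> subst k b (PP J i (Var l)) = PP J i (Var l)"
  unfolding PP_def using AA_free
  by (simp add: subst_prod subst_diff subst_Var_other subst_free)

lemma PP_polyring: "i \<le> Suc n \<Longrightarrow> t \<in> polyring n \<Longrightarrow> PP J i t \<in> polyring n"
  unfolding PP_def by (rule polyring_prod, rule polyring_diff) (auto intro: AA_polyring)

lemma PP_homogeneous: "homogeneous (card (AA J i)) (PP J i (Var k))"
  unfolding PP_def
  by (rule homogeneous_prod) (auto simp: AA_def intro!: homogeneous_diff homogeneous_Var[simplified] homogeneous_zero homogeneous_uminus)

lemma PP_nonzero: "PP J i (Var i) \<noteq> 0"
  unfolding PP_def using finite_AA AA_free Var_minus_free_nonzero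
  by (auto simp: prod_zero_iff)

lemma PP_dvd_mem: "a \<in> AA J i \<Longrightarrow> (t - a) dvd PP J i t"
  unfolding PP_def using finite_AA by (rule dvd_prodI)


definition DC :: "nat \<Rightarrow> nat set \<Rightarrow> (nat \<Rightarrow> mpoly) \<Rightarrow> bool" where
  "DC n J \<delta> \<longleftrightarrow> is_der n \<delta> \<and> (\<forall>k\<in>{1..n}. Var k dvd \<delta> k) \<and>
     (\<forall>j k. j \<in> {1..n} - J \<longrightarrow> j < k \<longrightarrow> k \<le> n \<longrightarrow>
        (Var j - Var k) dvd (\<delta> j - \<delta> k) \<and> (Var j + Var k) dvd (\<delta> j + \<delta> k))"

lemma Var_diff_nonzero: "j \<noteq> k \<Longrightarrow> Var j - Var k \<noteq> 0"
  using Var_inj by force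

lemma Var_add_nonzero: "Var j + Var k \<noteq> 0"
proof
  assume "Var j + Var k = 0"
  then have "Var j = - Var k" by (simp add: eq_neg_iff_add_eq_0)
  then show False using Var_neq_neg by blast
qed

lemma Der_iff: "\<delta> \<in> Der_arr n (B_tilde n J) \<longleftrightarrow> DC n J \<delta>"
proof
  assume d: "\<delta> \<in> Der_arr n (B_tilde n J)"
  then have isd: "is_der n \<delta>" and cond: "\<And>\<alpha>. \<alpha> \<in> B_tilde n J \<Longrightarrow> \<exists>q\<in>polyring n. apply_der n \<delta> \<alpha> = \<alpha> * q"
    by (auto simp: Der_arr_def)
  have c1: "Var k dvd \<delta> k" if "k \<in> {1..n}" for k
  proof -
    have "Var k \<in> B_tilde n J" using that by (auto simp: B_tilde_def)
    then obtain q where "apply_der n \<delta> (Var k) = Var k * q" using cond by blast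
    then show ?thesis using apply_der_Var[OF that] by (metis dvd_triv_left)
  qed
  have c2: "(Var j - Var k) dvd (\<delta> j - \<delta> k) \<and> (Var j + Var k) dvd (\<delta> j + \<delta> k)"
    if "j \<in> {1..n} - J" "j < k" "k \<le> n" for j k
  proof -
    have jk: "j \<in> {1..n}" "k \<in> {1..n}" using that by auto
    have "Var j - Var k \<in> B_tilde n J" "Var j + Var k \<in> B_tilde n J"
      using that unfolding B_tilde_def by blast+
    then obtain q1 q2 where "apply_der n \<delta> (Var j - Var k) = (Var j - Var k) * q1"
      "apply_der n \<delta> (Var j + Var k) = (Var j + Var k) * q2" using cond by blast
    then show ?thesis
      by (simp add: apply_der_diff apply_der_add apply_der_Var[OF jk(1)] apply_der_Var[OF jk(2)])
  qed
  show "DC n J \<delta>" unfolding DC_def using isd c1 c2 by blast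
next
  assume dc: "DC n J \<delta>"
  then have isd: "is_der n \<delta>" by (simp add: DC_def)
  then have pr: "\<And>k. k \<in> {1..n} \<Longrightarrow> \<delta> k \<in> polyring n" by (simp add: is_der_def)
  have "\<exists>q\<in>polyring n. apply_der n \<delta> \<alpha> = \<alpha> * q" if aB: "\<alpha> \<in> B_tilde n J" for \<alpha>
  proof -
    consider (a) k where "k \<in> {1..n}" "\<alpha> = Var k"
      | (b) j k where "j \<in> {1..n} - J" "j < k" "k \<le> n" "\<alpha> = Var j - Var k"
      | (c) j k where "j \<in> {1..n} - J" "j < k" "k \<le> n" "\<alpha> = Var j + Var k"
      using aB unfolding B_tilde_def by blast
    then show ?thesis
    proof cases
      case a
      then show ?thesis using dc pr[OF a(1)] polyring_Var[OF a(1)] Var_nonzero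
        by (auto simp: DC_def apply_der_Var intro!: polyring_dvd)
    next
      case b
      then have jk: "j \<in> {1..n}" "k \<in> {1..n}" by auto
      have "(Var j - Var k) dvd (\<delta> j - \<delta> k)" using dc b by (simp add: DC_def)
      then show ?thesis using b jk pr Var_diff_nonzero[of j k]
        by (auto simp: apply_der_diff apply_der_Var intro!: polyring_dvd polyring_diff polyring_Var)
    next
      case c
      then have jk: "j \<in> {1..n}" "k \<in> {1..n}" by auto
      have "(Var j + Var k) dvd (\<delta> j + \<delta> k)" using dc c by (simp add: DC_def)
      then show ?thesis using c jk pr Var_add_nonzero[of j k]
        by (auto simp: apply_der_add apply_der_Var intro!: polyring_dvd polyring_add polyring_Var)
    qed
  qed
  then show "\<delta> \<in> Der_arr n (B_tilde n J)" using isd by (simp add: Der_arr_def)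
qed


lemma zero_AA: "0 \<in> AA J i" by (simp add: AA_def)
lemma Var_AA: "j \<in> SS J i \<Longrightarrow> Var j \<in> AA J i" by (simp add: AA_def)
lemma negVar_AA: "j \<in> SS J i \<Longrightarrow> - Var j \<in> AA J i" by (simp add: AA_def)

lemma th_DC:
  assumes "1 \<le> i" "i \<le> n"
  shows "DC n J (th n J i)"
proof -
  have isd: "is_der n (th n J i)"
    unfolding is_der_def th_def using assms
    by (auto intro!: PP_polyring polyring_Var simp: polyring_zero)
  have c1: "Var k dvd th n J i k" if "k \<in> {1..n}" for k
    using PP_dvd_mem[OF zero_AA, of "Var k" J i] by (simp add: th_def)
  have c2: "(Var j - Var k) dvd (th n J i j - th n J i k) \<and> (Var j + Var k) dvd (th n J i j + th n J i k)"
    if jk: "j \<in> {1..n} - J" "j < k" "k \<le> n" for j k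
  proof (cases "i \<le> j")
    case True
    then have e: "th n J i j = PP J i (Var j)" "th n J i k = PP J i (Var k)" using jk by (auto simp: th_def)
    have fk: "free j (Var k)" "free j (- Var k)" using jk by (auto intro!: free_Var free_uminus)
    have "subst j (Var k) (PP J i (Var j) - PP J i (Var k)) = 0"
      using True jk by (simp add: subst_diff subst_PP subst_PP_other)
    then have d1: "(Var j - Var k) dvd (PP J i (Var j) - PP J i (Var k))" by (rule factor_theorem)
    have "subst j (- Var k) (PP J i (Var j) + PP J i (Var k)) = 0"
      using True jk by (simp add: subst_add subst_PP subst_PP_other PP_odd)
    then have "(Var j - - Var k) dvd (PP J i (Var j) + PP J i (Var k))" by (rule factor_theorem)
    then show ?thesis using d1 e by simp
  next
    case False
    show ?thesis
    proof (cases "i \<le> k")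
      case True
      have jS: "j \<in> SS J i" using False jk by (auto simp: SS_def)
      have e: "th n J i j = 0" "th n J i k = PP J i (Var k)" using jk True False by (auto simp: th_def)
      have d1: "(Var k - Var j) dvd PP J i (Var k)" by (rule PP_dvd_mem[OF Var_AA[OF jS]])
      have d2: "(Var k - - Var j) dvd PP J i (Var k)" by (rule PP_dvd_mem[OF negVar_AA[OF jS]])
      have "Var j - Var k = - (Var k - Var j)" by simp
      then have "(Var j - Var k) dvd (0 - PP J i (Var k))" using d1 by (simp only: minus_dvd_iff diff_0 dvd_minus_iff)
      moreover have "(Var j + Var k) dvd (0 + PP J i (Var k))" using d2 by (simp add: add.commute)
      ultimately show ?thesis using e by simp
    next
      case False
      then have "th n J i j = 0" "th n J i k = 0" using jk \<open>\<not> i \<le> j\<close> by (auto simp: th_def)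
      then show ?thesis by simp
    qed
  qed
  show ?thesis unfolding DC_def using isd c1 c2 by blast
qed

lemma th_homogeneous: "homogeneous_der n (2 * card ({1..<i} - J) + 1) (th n J i)"
  unfolding homogeneous_der_def th_def
  using PP_homogeneous[of J i] card_AA[of J i]
  by (auto simp: SS_def homogeneous_zero)

lemma th_zero_below: "k < i \<Longrightarrow> th n J i k = 0"
  by (simp add: th_def)

lemma th_diag: "1 \<le> i \<Longrightarrow> i \<le> n \<Longrightarrow> th n J i i = PP J i (Var i)"
  by (simp add: th_def)


lemma DC_step:
  assumes "DC n J \<delta>" "DC n J \<theta>" "g \<in> polyring n"
  shows "DC n J (\<lambda>k. \<delta> k - g * \<theta> k)"
proof -
  have "is_der n (\<lambda>k. \<delta> k - g * \<theta> k)"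
    using assms unfolding DC_def is_der_def by (auto intro!: polyring_diff polyring_mult)
  moreover have "\<forall>k\<in>{1..n}. Var k dvd (\<delta> k - g * \<theta> k)"
    using assms unfolding DC_def by (auto intro!: dvd_diff dvd_mult)
  moreover have "(Var j - Var k) dvd ((\<delta> j - g * \<theta> j) - (\<delta> k - g * \<theta> k)) \<and>
      (Var j + Var k) dvd ((\<delta> j - g * \<theta> j) + (\<delta> k - g * \<theta> k))"
    if "j \<in> {1..n} - J" "j < k" "k \<le> n" for j k
  proof -
    have a: "(Var j - Var k) dvd (\<delta> j - \<delta> k)" "(Var j + Var k) dvd (\<delta> j + \<delta> k)"
      "(Var j - Var k) dvd (\<theta> j - \<theta> k)" "(Var j + Var k) dvd (\<theta> j + \<theta> k)"
      using assms that unfolding DC_def by blast+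
    have e1: "(\<delta> j - g * \<theta> j) - (\<delta> k - g * \<theta> k) = (\<delta> j - \<delta> k) - g * (\<theta> j - \<theta> k)"
      and e2: "(\<delta> j - g * \<theta> j) + (\<delta> k - g * \<theta> k) = (\<delta> j + \<delta> k) - g * (\<theta> j + \<theta> k)"
      by (simp_all add: algebra_simps)
    show ?thesis using a unfolding e1 e2 by (blast intro: dvd_diff dvd_mult)
  qed
  ultimately show ?thesis unfolding DC_def by blast
qed

lemma diag_dvd:
  assumes dc: "DC n J \<epsilon>" and i: "1 \<le> i" "i \<le> n" and z: "\<And>k. 1 \<le> k \<Longrightarrow> k < i \<Longrightarrow> \<epsilon> k = 0"
  shows "PP J i (Var i) dvd \<epsilon> i"
  unfolding PP_def
proof (rule prod_lin_dvd[OF finite_AA])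
  fix a assume "a \<in> AA J i" then show "free i a" by (rule AA_free) simp
next
  fix a assume a: "a \<in> AA J i"
  then consider "a = 0" | j where "j \<in> SS J i" "a = Var j" | j where "j \<in> SS J i" "a = - Var j"
    unfolding AA_def by blast
  then show "(Var i - a) dvd \<epsilon> i"
  proof cases
    case 1 then show ?thesis using dc i by (simp add: DC_def)
  next
    case 2
    then have j: "j \<in> {1..n} - J" "j < i" "1 \<le> j" using i by (auto simp: SS_def)
    then have "(Var j - Var i) dvd (\<epsilon> j - \<epsilon> i)" using dc i unfolding DC_def by blast
    then have "(Var j - Var i) dvd (- \<epsilon> i)" using z[OF j(3) j(2)] by simp
    then have "- (Var i - Var j) dvd (- \<epsilon> i)" by (simp add: minus_diff_eq)
    then show ?thesis using 2 by (simp only: minus_dvd_iff dvd_minus_iff)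
  next
    case 3
    then have j: "j \<in> {1..n} - J" "j < i" "1 \<le> j" using i by (auto simp: SS_def)
    then have "(Var j + Var i) dvd (\<epsilon> j + \<epsilon> i)" using dc i unfolding DC_def by blast
    then show ?thesis using z[OF j(3) j(2)] 3 by (simp add: add.commute)
  qed
qed

lemma generation:
  assumes d: "DC n J \<delta>"
  shows "\<exists>g. (\<forall>j\<in>{1..n}. g j \<in> polyring n) \<and> (\<forall>i. \<delta> i = (\<Sum>j=1..n. g j * th n J j i))"
proof -
  have "\<forall>m. m \<le> n \<longrightarrow> (\<exists>g. (\<forall>j. g j \<in> polyring n) \<and> DC n J (\<lambda>k. \<delta> k - (\<Sum>j=1..m. g j * th n J j k)) \<and>
          (\<forall>k. 1 \<le> k \<and> k \<le> m \<longrightarrow> \<delta> k - (\<Sum>j=1..m. g j * th n J j k) = 0))"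
  proof (intro allI)
    fix m show "m \<le> n \<longrightarrow> (\<exists>g. (\<forall>j. g j \<in> polyring n) \<and> DC n J (\<lambda>k. \<delta> k - (\<Sum>j=1..m. g j * th n J j k)) \<and>
          (\<forall>k. 1 \<le> k \<and> k \<le> m \<longrightarrow> \<delta> k - (\<Sum>j=1..m. g j * th n J j k) = 0))"
    proof (induction m)
      case 0
      show ?case using d by (intro impI exI[of _ "\<lambda>_. 0"]) (auto simp: polyring_zero)
    next
      case (Suc m)
      show ?case
      proof
        assume sm: "Suc m \<le> n"
        then obtain g where g: "\<forall>j. g j \<in> polyring n" and dc: "DC n J (\<lambda>k. \<delta> k - (\<Sum>j=1..m. g j * th n J j k))"
          and z: "\<forall>k. 1 \<le> k \<and> k \<le> m \<longrightarrow> \<delta> k - (\<Sum>j=1..m. g j * th n J j k) = 0"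
          using Suc.IH by auto
        define \<epsilon> where "\<epsilon> = (\<lambda>k. \<delta> k - (\<Sum>j=1..m. g j * th n J j k))"
        let ?i = "Suc m"
        have dvd: "PP J ?i (Var ?i) dvd \<epsilon> ?i"
          using diag_dvd[of n J \<epsilon> ?i] dc z sm unfolding \<epsilon>_def by auto
        have epr: "\<epsilon> ?i \<in> polyring n" using dc sm unfolding \<epsilon>_def DC_def is_der_def by auto
        have ppr: "PP J ?i (Var ?i) \<in> polyring n" using sm by (intro PP_polyring polyring_Var) auto
        obtain h where h: "h \<in> polyring n" "\<epsilon> ?i = PP J ?i (Var ?i) * h"
          using polyring_dvd[OF epr ppr PP_nonzero dvd] by blast
        define g' where "g' = g(?i := h)"
        have sum_eq: "(\<Sum>j=1..?i. g' j * th n J j k) = (\<Sum>j=1..m. g j * th n J j k) + h * th n J ?i k" for k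
        proof -
          have "(\<Sum>j=1..?i. g' j * th n J j k) = (\<Sum>j=1..m. g' j * th n J j k) + g' ?i * th n J ?i k"
            by simp
          moreover have "(\<Sum>j=1..m. g' j * th n J j k) = (\<Sum>j=1..m. g j * th n J j k)"
            by (rule sum.cong) (auto simp: g'_def)
          ultimately show ?thesis by (simp add: g'_def)
        qed
        have "\<forall>j. g' j \<in> polyring n" using g h by (simp add: g'_def)
        moreover have "DC n J (\<lambda>k. \<delta> k - (\<Sum>j=1..?i. g' j * th n J j k))"
        proof -
          have "DC n J (\<lambda>k. \<epsilon> k - h * th n J ?i k)"
            using DC_step[OF dc[folded \<epsilon>_def] th_DC[of ?i n J] h(1)] sm by simp
          then show ?thesis unfolding sum_eq \<epsilon>_def by (simp add: algebra_simps)
        qed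
        moreover have "\<forall>k. 1 \<le> k \<and> k \<le> ?i \<longrightarrow> \<delta> k - (\<Sum>j=1..?i. g' j * th n J j k) = 0"
        proof (intro allI impI)
          fix k assume k: "1 \<le> k \<and> k \<le> ?i"
          have "\<delta> k - (\<Sum>j=1..?i. g' j * th n J j k) = \<epsilon> k - h * th n J ?i k"
            unfolding sum_eq \<epsilon>_def by (simp add: algebra_simps)
          also have "\<dots> = 0"
          proof (cases "k = ?i")
            case True
            then show ?thesis using h sm by (simp add: th_diag mult.commute)
          next
            case False
            then have "k \<le> m" "k < ?i" using k by auto
            then show ?thesis using z k by (simp add: th_zero_below \<epsilon>_def)
          qed
          finally show "\<delta> k - (\<Sum>j=1..?i. g' j * th n J j k) = 0" .
        qed
        ultimately show "\<exists>g. (\<forall>j. g j \<in> polyring n) \<and> DC n J (\<lambda>k. \<delta> k - (\<Sum>j=1..?i. g j * th n J j k)) \<and>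
          (\<forall>k. 1 \<le> k \<and> k \<le> ?i \<longrightarrow> \<delta> k - (\<Sum>j=1..?i. g j * th n J j k) = 0)" by blast
      qed
    qed
  qed
  then obtain g where g: "\<forall>j. g j \<in> polyring n"
    and z: "\<forall>k. 1 \<le> k \<and> k \<le> n \<longrightarrow> \<delta> k - (\<Sum>j=1..n. g j * th n J j k) = 0" by blast
  have "\<delta> i = (\<Sum>j=1..n. g j * th n J j i)" for i
  proof (cases "1 \<le> i \<and> i \<le> n")
    case True then show ?thesis using z by auto
  next
    case False
    then have "\<delta> i = 0" using d by (auto simp: DC_def is_der_def)
    moreover have "th n J j i = 0" for j using False unfolding th_def by auto
    ultimately show ?thesis by simp
  qed
  then show ?thesis using g by blast
qed

lemma independence:
  assumes "\<forall>i. (\<Sum>j=1..n. g j * th n J j i) = 0"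
  shows "\<forall>j\<in>{1..n}. g j = 0"
proof -
  have "1 \<le> i \<longrightarrow> i \<le> n \<longrightarrow> g i = 0" for i
  proof (induction i rule: less_induct)
    case (less i)
    show ?case
    proof (intro impI)
      assume i: "1 \<le> i" "i \<le> n"
      have "(\<Sum>j\<in>{1..n}. g j * th n J j i) = g i * th n J i i + (\<Sum>j\<in>{1..n} - {i}. g j * th n J j i)"
        using i by (simp add: sum.remove)
      moreover have "(\<Sum>j\<in>{1..n} - {i}. g j * th n J j i) = 0"
      proof (rule sum.neutral, intro ballI)
        fix j assume j: "j \<in> {1..n} - {i}"
        show "g j * th n J j i = 0"
        proof (cases "j < i")
          case True then show ?thesis using less j by auto
        next
          case False then show ?thesis using j by (simp add: th_zero_below)
        qed
      qed
      ultimately have "g i * PP J i (Var i) = 0" using assms i by (simp add: th_diag)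
      then show "g i = 0" using PP_nonzero by simp
    qed
  qed
  then show ?thesis by auto
qed

theorem mainTheorem17:
  fixes n :: nat and J :: "nat set"
  assumes "J \<subseteq> {1..n}"
  shows "free_with_exponents n (B_tilde n J) (\<lambda>i. 2 * card ({1..<i} - J) + 1)"
  unfolding free_with_exponents_def
proof (intro exI[of _ "th n J"] conjI ballI allI impI)
  fix j assume "j \<in> {1..n}"
  then show "th n J j \<in> Der_arr n (B_tilde n J)" by (simp add: Der_iff th_DC)
next
  fix j assume "j \<in> {1..n}"
  show "homogeneous_der n (2 * card ({1..<j} - J) + 1) (th n J j)" by (rule th_homogeneous)
next
  fix \<delta> assume "\<delta> \<in> Der_arr n (B_tilde n J)"
  then show "\<exists>g. (\<forall>j\<in>{1..n}. g j \<in> polyring n) \<and> (\<forall>i. \<delta> i = (\<Sum>j = 1..n. g j * th n J j i))"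
    by (intro generation) (simp add: Der_iff)
next
  fix g j assume "(\<forall>j\<in>{1..n}. g j \<in> polyring n) \<and> (\<forall>i. (\<Sum>j = 1..n. g j * th n J j i) = 0)" "j \<in> {1..n}"
  then show "g j = 0" using independence[where g=g and n=n and J=J] by blast
qed

end
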